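(* Let $e\ge 3$, let $y\in[1,e-1]$ be rational with denominator $z>1$, and $i\in\mathbb Z/e\mathbb Z$. Suppose a partition $\lambda$ has a removable $i$-node $(r,c)$ and an addable $i$-node $(s,d)$ with $\mathrm{dep}(s,d)-e<\mathrm{dep}(r,c)<\mathrm{dep}(s,d)$. Then $\lambda$ has a $y$-bad hook.
   Context: Nodes are elements $(r,c)$ of $\mathbb N^2$ (row, column); the residue of $(r,c)\in\mathbb Z^2$ is $c-r+e\mathbb Z$ and an $i$-node is a node of residue $i$. A removable node of $\lambda$ is a node $(r,\lambda_r)$ with $\lambda_r>\lambda_{r+1}$; an addable node is a node not in $\lambda$ whose addition gives a partition. The depth of $(r,c)\in\mathbb Z^2$ is $\mathrm{dep}(r,c)=yr+(e-y)c$. The hook of $\lambda$ at $(r,c)$ has length $\lambda_r-c+\lambda'_c-r+1$ and arm length $\lambda_r-c$. A hook is $y$-bad if it has length $te$ and arm length $\lfloor yt\rfloor$ for some positive integer $t$ not divisible by $z$. *)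

theory Defs
  imports Complex_Main
begin

text \<open>Partitions: lambda :: nat => nat, where lambda r is the length of row r
  for rows r >= 1 (index 0 is ignored). Nodes are pairs (r,c) with r,c >= 1.\<close>

definition is_partition :: "(nat \<Rightarrow> nat) \<Rightarrow> bool" where
  "is_partition la \<longleftrightarrow> (\<forall>r\<ge>1. la (Suc r) \<le> la r) \<and> finite {r. r \<ge> 1 \<and> 0 < la r}"

definition in_diagram :: "(nat \<Rightarrow> nat) \<Rightarrow> nat \<times> nat \<Rightarrow> bool" where
  "in_diagram la n \<longleftrightarrow> (case n of (r, c) \<Rightarrow> 1 \<le> r \<and> 1 \<le> c \<and> c \<le> la r)"

definition conj_part :: "(nat \<Rightarrow> nat) \<Rightarrow> nat \<Rightarrow> nat" where
  "conj_part la c = card {r. 1 \<le> r \<and> c \<le> la r}"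

definition removable :: "(nat \<Rightarrow> nat) \<Rightarrow> nat \<times> nat \<Rightarrow> bool" where
  "removable la n \<longleftrightarrow> (case n of (r, c) \<Rightarrow>
      1 \<le> r \<and> 1 \<le> c \<and> c = la r \<and> la (Suc r) < la r)"

definition addable :: "(nat \<Rightarrow> nat) \<Rightarrow> nat \<times> nat \<Rightarrow> bool" where
  "addable la n \<longleftrightarrow> (case n of (s, d) \<Rightarrow>
      1 \<le> s \<and> 1 \<le> d \<and> \<not> in_diagram la (s, d) \<and>
      is_partition (la(s := la s + 1)) \<and> d = la s + 1)"

definition residue :: "nat \<Rightarrow> nat \<times> nat \<Rightarrow> int" where
  "residue e n = (case n of (r, c) \<Rightarrow> (int c - int r) mod int e)"

definition dep :: "nat \<Rightarrow> rat \<Rightarrow> nat \<times> nat \<Rightarrow> rat" where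
  "dep e y n = (case n of (r, c) \<Rightarrow> y * of_nat r + (of_nat e - y) * of_nat c)"

definition hook_length :: "(nat \<Rightarrow> nat) \<Rightarrow> nat \<times> nat \<Rightarrow> int" where
  "hook_length la n = (case n of (r, c) \<Rightarrow>
      int (la r) - int c + int (conj_part la c) - int r + 1)"

definition arm_length :: "(nat \<Rightarrow> nat) \<Rightarrow> nat \<times> nat \<Rightarrow> int" where
  "arm_length la n = (case n of (r, c) \<Rightarrow> int (la r) - int c)"

definition denom :: "rat \<Rightarrow> int" where
  "denom y = snd (quotient_of y)"

definition bad_hook :: "nat \<Rightarrow> rat \<Rightarrow> (nat \<Rightarrow> nat) \<Rightarrow> nat \<times> nat \<Rightarrow> bool" where
  "bad_hook e y la n \<longleftrightarrow> in_diagram la n \<and>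
     (\<exists>t::int. 0 < t \<and> \<not> denom y dvd t \<and> hook_length la n = t * int e \<and>
        arm_length la n = \<lfloor>y * of_int t\<rfloor>)"

definition has_bad_hook :: "nat \<Rightarrow> rat \<Rightarrow> (nat \<Rightarrow> nat) \<Rightarrow> bool" where
  "has_bad_hook e y la \<longleftrightarrow> (\<exists>n. bad_hook e y la n)"

end

theory Submission
  imports Defs
begin

lemma mono_part:
  assumes "is_partition la" "1 \<le> a" "a \<le> b"
  shows "la b \<le> la a"
  using assms(3)
proof (induction b rule: dec_induct)
  case base then show ?case by simp
next
  case (step n)
  have "la (Suc n) \<le> la n" using assms(1,2) step(1) unfolding is_partition_def by auto
  then show ?case using step by simp
qed

lemma denom_int:
  assumes "denom y dvd t"
  shows "\<exists>k. y * of_int t = of_int k"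
proof -
  obtain p q where pq: "quotient_of y = (p, q)" by (cases "quotient_of y") auto
  have y: "y = of_int p / of_int q" using quotient_of_div[OF pq] .
  have q: "q > 0" using quotient_of_denom_pos[OF pq] .
  from assms obtain k where t: "t = q * k" using pq unfolding denom_def by (auto elim: dvdE)
  have "y * of_int t = of_int (p * k)" using q by (simp add: y t)
  then show ?thesis by blast
qed

lemma floor_bad:
  fixes y :: rat and t B :: int
  assumes "of_int B < y * of_int t" "y * of_int t < of_int B + 1"
  shows "\<lfloor>y * of_int t\<rfloor> = B \<and> \<not> denom y dvd t"
proof
  show "\<lfloor>y * of_int t\<rfloor> = B" using assms by (simp add: floor_eq_iff)
  show "\<not> denom y dvd t"
  proof
    assume "denom y dvd t"
    then obtain k where k: "y * of_int t = of_int k" using denom_int by blast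
    then have "B < k" "k < B + 1" using assms by simp_all
    then show False by simp
  qed
qed

theorem mainTheorem4:
  fixes e :: nat and y :: rat and i :: int and la :: "nat \<Rightarrow> nat"
    and r c s d :: nat
  assumes "3 \<le> e"
    and "1 \<le> y" and "y \<le> of_nat e - 1"
    and "denom y > 1"
    and "is_partition la"
    and "removable la (r, c)" and "residue e (r, c) = i mod int e"
    and "addable la (s, d)" and "residue e (s, d) = i mod int e"
    and "dep e y (s, d) - of_nat e < dep e y (r, c)"
    and "dep e y (r, c) < dep e y (s, d)"
  shows "has_bad_hook e y la"
proof -
  have P: "is_partition la" by fact
  have rem: "1 \<le> r" "1 \<le> c" "c = la r" "la (Suc r) < la r"
    using assms(6) unfolding removable_def by auto
  have add: "1 \<le> s" "1 \<le> d" "d = la s + 1" "is_partition (la(s := la s + 1))"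
    using assms(8) unfolding addable_def by auto
  have "(int c - int r) mod int e = (int d - int s) mod int e"
    using assms(7,9) unfolding residue_def by simp
  then have "int e dvd ((int d - int s) - (int c - int r))"
    by (metis mod_eq_dvd_iff)
  then obtain t where tL: "(int d - int s) - (int c - int r) = t * int e"
    by (metis dvd_def mult.commute)
  have e0: "(0::rat) < of_nat e" using assms(1) by simp
  have ddiff: "dep e y (s, d) - dep e y (r, c)
      = of_nat e * (of_int (int d - int c)) - y * of_int ((int d - int s) - (int c - int r))"
    unfolding dep_def by (simp add: algebra_simps)
  also have "\<dots> = of_nat e * (of_int (int d - int c) - y * of_int t)"
    unfolding tL by (simp add: algebra_simps)
  finally have ddiff: "dep e y (s, d) - dep e y (r, c) = of_nat e * (of_int (int d - int c) - y * of_int t)" .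
  have D1: "0 < of_nat e * (of_int (int d - int c) - y * of_int t)"
    using assms(11) ddiff by simp
  have D2: "of_nat e * (of_int (int d - int c) - y * of_int t) < of_nat e * 1"
    using assms(10) ddiff by simp
  have B1: "0 < of_int (int d - int c) - y * of_int t"
    using D1 e0 by (simp add: zero_less_mult_iff)
  have B2: "of_int (int d - int c) - y * of_int t < 1"
    using D2 e0 by (simp only: mult_less_cancel_left_pos)
  have "s \<noteq> r"
  proof
    assume "s = r"
    then have "(int d - int s) - (int c - int r) = 1" using rem add by simp
    then have "t * int e = 1" using tL by simp
    then show False
    proof -
      have "int e dvd 1" using \<open>t * int e = 1\<close> by (metis dvd_triv_right)
      then have "e = 1" by simp
      then show False using assms(1) by simp
    qed
  qed
  show ?thesis
  proof (cases "s < r")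
    case True
    have lsr: "la r \<le> la s" using mono_part[OF P add(1)] True by simp
    have cset: "{x. 1 \<le> x \<and> c \<le> la x} = {1..r}"
    proof (rule set_eqI, rule iffI)
      fix x assume "x \<in> {x. 1 \<le> x \<and> c \<le> la x}"
      then have x: "1 \<le> x" "c \<le> la x" by auto
      show "x \<in> {1..r}"
      proof (rule ccontr)
        assume "x \<notin> {1..r}"
        then have "Suc r \<le> x" using x by auto
        then have "la x \<le> la (Suc r)" using mono_part[OF P] by simp
        then show False using x rem by simp
      qed
    next
      fix x assume "x \<in> {1..r}"
      then show "x \<in> {x. 1 \<le> x \<and> c \<le> la x}" using mono_part[OF P, of x r] rem by auto
    qed
    have cp: "conj_part la c = r" unfolding conj_part_def cset by simp
    have hl: "hook_length la (s, c) = t * int e"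
      unfolding hook_length_def using cp tL add by simp
    have al: "arm_length la (s, c) = int d - int c - 1"
      unfolding arm_length_def using add by simp
    have tpos: "0 < t"
    proof -
      have "0 < t * int e" using tL True lsr rem add by simp
      then show ?thesis using assms(1) by (simp add: zero_less_mult_iff)
    qed
    have fb: "\<lfloor>y * of_int t\<rfloor> = int d - int c - 1 \<and> \<not> denom y dvd t"
      using floor_bad[of "int d - int c - 1" y t] B1 B2 by simp
    have "bad_hook e y la (s, c)"
      unfolding bad_hook_def in_diagram_def using add rem lsr hl al fb tpos by auto
    then show ?thesis unfolding has_bad_hook_def by blast
  next
    case False
    then have sr: "r < s" using \<open>s \<noteq> r\<close> by simp
    have ls: "la s \<le> la (Suc r)" using mono_part[OF P, of "Suc r" s] sr by simp
    have prev: "d \<le> la (s - 1)"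
    proof -
      have "s - 1 \<ge> 1" using sr rem by simp
      then have "(la(s := la s + 1)) (Suc (s - 1)) \<le> (la(s := la s + 1)) (s - 1)"
        using add(4) unfolding is_partition_def by blast
      then show ?thesis using sr rem add by (auto split: if_splits)
    qed
    have cset: "{x. 1 \<le> x \<and> d \<le> la x} = {1..s - 1}"
    proof (rule set_eqI, rule iffI)
      fix x assume "x \<in> {x. 1 \<le> x \<and> d \<le> la x}"
      then have x: "1 \<le> x" "d \<le> la x" by auto
      show "x \<in> {1..s - 1}"
      proof (rule ccontr)
        assume "x \<notin> {1..s - 1}"
        then have "s \<le> x" using x by auto
        then have "la x \<le> la s" using mono_part[OF P add(1)] by simp
        then show False using x add by simp
      qed
    next
      fix x assume "x \<in> {1..s - 1}"
      then show "x \<in> {x. 1 \<le> x \<and> d \<le> la x}" using mono_part[OF P, of x "s - 1"] prev by auto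
    qed
    have cp: "conj_part la d = s - 1" unfolding conj_part_def cset by simp
    have hl: "hook_length la (r, d) = - t * int e"
      unfolding hook_length_def using cp tL add rem sr by simp
    have al: "arm_length la (r, d) = int c - int d"
      unfolding arm_length_def using rem by simp
    have dc: "d \<le> c" using ls rem add by simp
    have tpos: "0 < - t"
    proof -
      have "0 < - t * int e" using tL sr dc by simp
      then show ?thesis using assms(1) by (auto simp add: mult_less_0_iff)
    qed
    have fb: "\<lfloor>y * of_int (- t)\<rfloor> = int c - int d \<and> \<not> denom y dvd (- t)"
      using floor_bad[of "int c - int d" y "- t"] B1 B2 by simp
    have "bad_hook e y la (r, d)"
      unfolding bad_hook_def in_diagram_def using add rem dc hl al fb tpos by (auto intro!: exI[of _ "- t"])
    then show ?thesis unfolding has_bad_hook_def by blast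
  qed
qed

end
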